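(* For integers $0\le m\le n$, $$\sum_{j=0}^{n-m}(-2)^{-j}\binom{n-m+j}{j}\binom{2n}{n+m+j}=2^{m-n}\binom{n}{m}\frac{\binom{2n}{n}}{\binom{2m}{m}}.$$ *)

theory Defs
  imports Complex_Main
begin

end

theory Submission
  imports Defs
begin

declare binomial_Suc_Suc[simp del]
lemma c1: "Suc s * (N choose Suc s) = (N - s) * (N choose s)"
  by (metis binomial_absorption binomial_absorb_comp)
lemma c2: "(2*k+1 choose k) = (2*k+1 choose k+1)"
  using binomial_symmetric[of k "2*k+1"] by simp
lemma c3: "(j+1) * (k+j+1 choose j+1) = (k+j+1) * (k+j choose j)"
  using Suc_times_binomial[of j "k+j"] by simp
lemma c4: "(k+1) * (k+1+j choose j) = (k+1+j) * (k+j choose j)"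
proof -
  have "(k+1+j choose j) = (k+1+j choose k+1)" using binomial_symmetric[of j "k+1+j"] by simp
  moreover have "(k+j choose j) = (k+j choose k)" using binomial_symmetric[of j "k+j"] by simp
  ultimately show ?thesis using Suc_times_binomial[of k "k+j"] by simp
qed
lemma c5:  "(q+1) * (2*q+2 choose q+1) = (2*q+2) * (2*q+1 choose q)"
  using Suc_times_binomial[of q "2*q+1"] by simp
lemma c6: "(q+1) * (2*q+1 choose q+1) = (2*q+1) * (2*q choose q)"
  using Suc_times_binomial[of q "2*q"] by simp


lemma pt:
  fixes x :: real
  assumes "j \<le> k" "k \<le> 2*n" "x = -1/2"
  shows "real (k+1) * (x^j * real (k+1+j choose j) * real (2*n choose (k+1-j)))
     - (2*real n - 1 - 2*real k) * (x^j * real (k+j choose j) * real (2*n choose (k-j)))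
   = (-2 * x^(Suc j) * real (Suc j) * real (k + Suc j choose Suc j) * real (2*n choose (k+1 - Suc j)))
     - (-2 * x^j * real j * real (k+j choose j) * real (2*n choose (k+1-j)))"
proof -
  define c where "c = real (k+j choose j)"
  define a where "a = real (2*n choose (k-j))"
  define b where "b = real (2*n choose (k+1-j))"
  have h4: "real (k+1) * real (k+1+j choose j) = real (k+1+j) * c"
    unfolding c_def using c4[of k j] by (metis of_nat_mult)
  have h3: "real (Suc j) * real (k + Suc j choose Suc j) = real (k+j+1) * c"
    unfolding c_def using c3[of j k] by (metis of_nat_mult Suc_eq_plus1 add_Suc_right)
  have kj: "k+1-j = Suc (k-j)" using assms by simp
  have h1n: "Suc (k-j) * (2*n choose Suc (k-j)) = (2*n - (k-j)) * (2*n choose (k-j))" by (rule c1)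
  have h1: "(real k - real j + 1) * b = (2*real n - (real k - real j)) * a"
  proof -
    have "real (Suc (k-j)) * b = real (2*n - (k-j)) * a"
      unfolding a_def b_def kj using h1n by (metis of_nat_mult)
    moreover have "real (2*n - (k-j)) = 2*real n - (real k - real j)" using assms by (simp add: of_nat_diff)
    moreover have "real (Suc (k-j)) = real k - real j + 1" using assms by (simp add: of_nat_diff)
    ultimately show ?thesis by (simp only:)
  qed
  have kk: "k + 1 - Suc j = k - j" by simp
  have x2: "-2 * x^(Suc j) = x^j" using assms by simp
  have "real (k+1) * (x^j * real (k+1+j choose j) * b) = x^j * b * (real (k+1+j) * c)"
    using h4 by (simp add: algebra_simps)
  moreover have "-2 * x^(Suc j) * real (Suc j) * real (k + Suc j choose Suc j) * a = x^j * a * (real (k+j+1) * c)"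
    using h3 x2 by (metis mult.commute mult.left_commute)
  ultimately have "real (k+1) * (x^j * real (k+1+j choose j) * b)
     - (2*real n - 1 - 2*real k) * (x^j * c * a)
   = (-2 * x^(Suc j) * real (Suc j) * real (k + Suc j choose Suc j) * a)
     - (-2 * x^j * real j * c * b)
    \<longleftrightarrow> x^j * c * ((real k - real j + 1) * b - (2*real n - (real k - real j)) * a) = 0"
    by (simp add: algebra_simps)
  moreover have "x^j * c * ((real k - real j + 1) * b - (2*real n - (real k - real j)) * a) = 0"
    using h1 by simp
  ultimately show ?thesis unfolding a_def b_def c_def kk by simp
qed

lemma Arec:
  fixes x :: real
  assumes "k+1 \<le> n" "x = -1/2"
  shows "real (k+1) * (\<Sum>j=0..k+1. x^j * real (k+1+j choose j) * real (2*n choose (k+1-j)))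
     = (2*real n - 1 - 2*real k) * (\<Sum>j=0..k. x^j * real (k+j choose j) * real (2*n choose (k-j)))"
proof -
  define G where "G j = -2 * x^j * real j * real (k+j choose j) * real (2*n choose (k+1-j))" for j
  have "real (k+1) * (\<Sum>j=0..k. x^j * real (k+1+j choose j) * real (2*n choose (k+1-j)))
     - (2*real n - 1 - 2*real k) * (\<Sum>j=0..k. x^j * real (k+j choose j) * real (2*n choose (k-j)))
     = (\<Sum>j=0..k. real (k+1) * (x^j * real (k+1+j choose j) * real (2*n choose (k+1-j)))
     - (2*real n - 1 - 2*real k) * (x^j * real (k+j choose j) * real (2*n choose (k-j))))"
    by (simp add: sum_distrib_left sum_subtractf)
  also have "\<dots> = (\<Sum>j=0..k. G (Suc j) - G j)"
    by (rule sum.cong[OF refl], unfold G_def, rule pt, use assms in auto)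
  also have "\<dots> = G (Suc k) - G 0" by (rule sum_Suc_diff) simp
  also have "\<dots> = -2 * x^(Suc k) * real (k+1) * real (2*k+1 choose k+1)"
    unfolding G_def proof -
    have a: "k + Suc k = 2*k+1" "k+1 - Suc k = 0" by simp_all
    show "-2 * x^(Suc k) * real (Suc k) * real (k + Suc k choose Suc k) * real (2*n choose (k+1 - Suc k))
      - (-2 * x^0 * real 0 * real (k+0 choose 0) * real (2*n choose (k+1-0)))
      = -2 * x^(Suc k) * real (k+1) * real (2*k+1 choose k+1)" unfolding a by simp
  qed
  finally have e1: "real (k+1) * (\<Sum>j=0..k. x^j * real (k+1+j choose j) * real (2*n choose (k+1-j)))
     - (2*real n - 1 - 2*real k) * (\<Sum>j=0..k. x^j * real (k+j choose j) * real (2*n choose (k-j)))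
     = -2 * x^(Suc k) * real (k+1) * real (2*k+1 choose k+1)" .
  have cc: "real (2*k+2 choose k+1) = 2 * real (2*k+1 choose k+1)"
  proof -
    have b1: "(Suc (2*k+1) choose Suc k) = (2*k+1 choose k) + (2*k+1 choose Suc k)" by (rule binomial_Suc_Suc)
    have s: "Suc (2*k+1) = 2*k+2" "Suc k = k+1" by simp_all
    have "(2*k+2 choose k+1) = 2 * (2*k+1 choose k+1)" using b1 c2[of k] unfolding s by simp
    then show ?thesis by (metis of_nat_mult of_nat_numeral)
  qed
  define f where "f j = x^j * real (k+1+j choose j) * real (2*n choose (k+1-j))" for j
  have sp: "(\<Sum>j=0..k+1. f j) = (\<Sum>j=0..k. f j) + f (k+1)"
    unfolding Suc_eq_plus1[symmetric] by (rule sum.atLeast0_atMost_Suc)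
  have fl: "f (k+1) = x^(Suc k) * real (2*k+2 choose k+1)"
  proof -
    have a: "k+1+(k+1) = 2*k+2" "k+1-(k+1) = 0" "k+1 = Suc k" by simp_all
    show ?thesis unfolding f_def a by (simp add: mult_2)
  qed
  have e1': "real (k+1) * (\<Sum>j=0..k. f j) = (2*real n - 1 - 2*real k) * (\<Sum>j=0..k. x^j * real (k+j choose j) * real (2*n choose (k-j)))
     + (-2 * x^(Suc k) * real (k+1) * real (2*k+1 choose k+1))"
    using e1 unfolding f_def by linarith
  have "real (k+1) * (\<Sum>j=0..k+1. f j) = real (k+1) * (\<Sum>j=0..k. f j) + real (k+1) * (x^(Suc k) * (2 * real (2*k+1 choose k+1)))"
    unfolding sp fl cc by (simp only: distrib_left)
  also have "\<dots> = (2*real n - 1 - 2*real k) * (\<Sum>j=0..k. x^j * real (k+j choose j) * real (2*n choose (k-j)))"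
    unfolding e1' by (simp add: algebra_simps)
  finally show ?thesis unfolding f_def .
qed




lemma alg:
  fixes S U V W Z CC h a b c :: real
  assumes "b*S = c*(h*U*CC/V)" "a*U = b*W" "a*V = 2*c*Z" "a>0" "b>0" "c>0" "Z>0"
  shows "S = h/2*W*CC/Z"
proof -
  have V: "V = 2*c*Z/a" using assms by (simp add: field_simps)
  have U: "U = b*W/a" using assms by (simp add: field_simps)
  have Vp: "V > 0" unfolding V using assms by simp
  have "S = c*(h*U*CC/V)/b" using assms Vp by (simp add: field_simps)
  also have "\<dots> = h/2*W*CC/Z" unfolding U V using assms by (simp add: field_simps)
  finally show ?thesis .
qed
lemma mainlem:
  fixes x :: real
  assumes "k \<le> n" "x = -1/2"
  shows "(\<Sum>j=0..k. x^j * real (k+j choose j) * real (2*n choose (k-j)))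
     = (1/2)^k * real (n choose (n-k)) * real (2*n choose n) / real (2*(n-k) choose (n-k))"
  using assms(1)
proof (induction k)
  case 0
  have "real (2*n choose n) > 0" using zero_less_binomial[of n "2*n"] by simp
  then show ?case by simp
next
  case (Suc k)
  define q where "q = n - Suc k"
  have nk: "n - k = Suc q" "n - Suc k = q" using Suc.prems q_def by auto
  have kn: "k \<le> n" using Suc.prems by simp
  note IH0 = Suc.IH[OF kn]
  have IH: "(\<Sum>j=0..k. x^j * real (k+j choose j) * real (2*n choose (k-j)))
     = (1/2)^k * real (n choose Suc q) * real (2*n choose n) / real (2*Suc q choose Suc q)"
    using IH0 unfolding nk(1) .
  have r: "real (k+1) * (\<Sum>j=0..k+1. x^j * real (k+1+j choose j) * real (2*n choose (k+1-j)))
     = (2*real n - 1 - 2*real k) * (\<Sum>j=0..k. x^j * real (k+j choose j) * real (2*n choose (k-j)))"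
    by (rule Arec) (use Suc.prems assms in auto)
  have f1: "real (Suc q) * real (n choose Suc q) = real (k+1) * real (n choose q)"
  proof -
    have "Suc q * (n choose Suc q) = (n - q) * (n choose q)" by (rule c1)
    moreover have "n - q = k+1" using nk Suc.prems by simp
    ultimately show ?thesis by (metis of_nat_mult)
  qed
  have f2: "real (Suc q) * real (2*Suc q choose Suc q) = 2 * (2 * real q + 1) * real (2*q choose q)"
  proof -
    have "Suc q * (2*Suc q choose Suc q) = (q+1) * (2*q+2 choose q+1)" by simp
    also have "\<dots> = (2*q+2) * (2*q+1 choose q)" by (rule c5)
    also have "\<dots> = (2*q+2) * (2*q+1 choose q+1)" using c2[of q] by simp
    also have "\<dots> = 2 * ((q+1) * (2*q+1 choose q+1))" by simp
    also have "\<dots> = 2 * ((2*q+1) * (2*q choose q))" using c6[of q] by simp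
    finally have "Suc q * (2*Suc q choose Suc q) = 2 * ((2*q+1) * (2*q choose q))" .
    then have "real (Suc q * (2*Suc q choose Suc q)) = real (2 * ((2*q+1) * (2*q choose q)))" by (rule arg_cong)
    then show ?thesis by (simp only: of_nat_mult of_nat_add of_nat_1 of_nat_numeral mult.assoc)
  qed
  have nqk: "n = q + Suc k" using nk(2) Suc.prems by arith
  have nq: "2*real n - 1 - 2*real k = 2 * real q + 1" unfolding nqk by simp
  have p1: "real (2*q choose q) > 0" using zero_less_binomial[of q "2*q"] by simp
  have r': "real (k+1) * (\<Sum>j=0..k+1. x^j * real (k+1+j choose j) * real (2*n choose (k+1-j)))
     = (2 * real q + 1) * ((1/2)^k * real (n choose Suc q) * real (2*n choose n) / real (2*Suc q choose Suc q))"
    using r unfolding nq IH .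
  have fin: "(\<Sum>j=0..k+1. x^j * real (k+1+j choose j) * real (2*n choose (k+1-j)))
     = (1/2)^k/2 * real (n choose q) * real (2*n choose n) / real (2*q choose q)"
    apply (rule alg[OF r' f1 f2]) using p1 by simp_all
  have e: "(1/2::real)^k/2 = (1/2)^Suc k" by simp
  show ?case unfolding nk(2) using fin unfolding e Suc_eq_plus1 .
qed

theorem lemma4:
  fixes m n :: nat
  assumes "m \<le> n"
  shows "(\<Sum>j=0..n-m. (-2::real) powi (- int j) * real ((n - m + j) choose j)
            * real ((2*n) choose (n + m + j)))
         = 2 powi (int m - int n) * real (n choose m)
           * real ((2*n) choose n) / real ((2*m) choose m)"
proof -
  define k where "k = n - m"
  have mk: "m = n - k" "k \<le> n" using assms k_def by auto
  have "(\<Sum>j=0..n-m. (-2::real) powi (- int j) * real ((n - m + j) choose j)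
            * real ((2*n) choose (n + m + j)))
      = (\<Sum>j=0..k. (-1/2::real)^j * real (k+j choose j) * real (2*n choose (k-j)))"
  proof (rule sum.cong)
    fix j assume "j \<in> {0..k}"
    then have j: "j \<le> k" by simp
    have "(2*n choose (n+m+j)) = (2*n choose (2*n - (n+m+j)))"
      by (rule binomial_symmetric) (use j mk in auto)
    moreover have "2*n - (n+m+j) = k - j" using j mk by simp
    moreover have "(-2::real) powi (- int j) = (-1/2)^j"
    proof -
      have "(-2::real) powi (- int j) = 1 / (-2)^j" by (simp add: power_int_minus inverse_eq_divide)
      also have "\<dots> = (1/(-2))^j" by (rule power_one_over[symmetric])
      finally show ?thesis by simp
    qed
    ultimately show "(-2::real) powi (- int j) * real ((n - m + j) choose j) * real ((2*n) choose (n + m + j))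
      = (-1/2::real)^j * real (k+j choose j) * real (2*n choose (k-j))"
      using k_def by simp
  qed (simp add: k_def)
  also have "\<dots> = (1/2)^k * real (n choose (n-k)) * real (2*n choose n) / real (2*(n-k) choose (n-k))"
    by (rule mainlem) (use mk in auto)
  also have "(1/2::real)^k = 2 powi (int m - int n)"
  proof -
    have "int m - int n = - int k" using mk by simp
    then show ?thesis by (simp add: power_int_minus power_one_over inverse_eq_divide)
  qed
  finally show ?thesis using mk by simp
qed


end
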